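(* Assume $\gamma=0$ and $L$ is not conformal. Let $I$ be a two-sided ideal of $L$; if $o(r)=n<\infty$, assume in addition that $\tilde\phi(h^n)-C\in I$ for some $C\in\mathbb C^\times$. Let $x\in I$ with homogeneous decomposition $x=\sum_{i\in\mathbb Z}x_i$, $x_i\in L_i$. Then there is an integer $m\ge0$ such that $x_ih^m\in I$ for all $i\in\mathbb Z$.
   Context: Let $r,s\in\mathbb C^\times$, $\phi(x)=\sum_i a_ix^i\in\mathbb C[x]$, and $L=L(\phi,r,s,0)$ the associative $\mathbb C$-algebra generated by $u,d,h$ with $hu=ruh$, $dh=rhd$, $du-sud=\phi(h)$; $L$ is $\mathbb Z$-graded by $\deg u=1,\deg d=-1,\deg h=0$, with components $L_i$. $L$ is conformal if there is $\psi\in\mathbb C[x]$ with $s\psi(x)-\psi(rx)=\phi(x)$; $L$ is not conformal iff $s=r^i$ and $a_i\neq0$ for some $i\ge0$. $o(r)$ is the multiplicative order of $r$. When $o(r)=n<\infty$ and $L$ is not conformal, fix $j$ with $s=r^j$, $0\le j\le n-1$, and write $\phi=\phi_0+\phi_1$ with $\phi_0(h)=\sum_{i\not\equiv j \ (\mathrm{mod}\ n)}a_ih^i$ and $\phi_1(h)=\sum_{i\equiv j\ (\mathrm{mod}\ n)}a_ih^i=sh^j\tilde\phi(h^n)$ for a polynomial $\tilde\phi$. When $o(r)=\infty$ there is a unique $j$ with $s=r^j$, and $\phi_1(h)=a_jh^j=sCh^j$, $C\neq0$, $\phi_0=\phi-\phi_1$. *)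

theory Defs
  imports Complex_Main "HOL-Computational_Algebra.Polynomial"
begin

text \<open>The free associative complex algebra on u, d, h: elements are finitely supported
  functions from words to coefficients; the down-up algebra L is its quotient by the ideal
  generated by the defining relations. Ideals of L are identified with ideals of the free
  algebra containing the relations.\<close>

datatype gen = U | D | H

type_synonym fa = "gen list \<Rightarrow> complex"

definition fin :: "fa \<Rightarrow> bool" where
  "fin f \<longleftrightarrow> finite {w. f w \<noteq> 0}"

definition fadd :: "fa \<Rightarrow> fa \<Rightarrow> fa" where
  "fadd f g = (\<lambda>w. f w + g w)"

definition fsub :: "fa \<Rightarrow> fa \<Rightarrow> fa" where
  "fsub f g = (\<lambda>w. f w - g w)"

definition fscale :: "complex \<Rightarrow> fa \<Rightarrow> fa" where
  "fscale c f = (\<lambda>w. c * f w)"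

definition fmul :: "fa \<Rightarrow> fa \<Rightarrow> fa" where
  "fmul f g = (\<lambda>w. \<Sum>k\<le>length w. f (take k w) * g (drop k w))"

definition mon :: "gen list \<Rightarrow> fa" where
  "mon v = (\<lambda>w. if w = v then 1 else 0)"

definition fone :: fa where "fone = mon []"

definition hpow :: "nat \<Rightarrow> fa" where
  "hpow m = mon (replicate m H)"

text \<open>Evaluation p(h^n) of a polynomial at the n-th power of h.\<close>
definition evalHpow :: "complex poly \<Rightarrow> nat \<Rightarrow> fa" where
  "evalHpow p n = (\<lambda>w. if (\<forall>g\<in>set w. g = H) \<and> n dvd length w
                        then coeff p (length w div n) else 0)"

definition evalH :: "complex poly \<Rightarrow> fa" where
  "evalH p = evalHpow p 1"

definition two_sided_ideal :: "fa set \<Rightarrow> bool" where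
  "two_sided_ideal I \<longleftrightarrow>
     (\<forall>x\<in>I. fin x) \<and> (\<lambda>w. 0) \<in> I \<and>
     (\<forall>x\<in>I. \<forall>y\<in>I. fadd x y \<in> I) \<and>
     (\<forall>x\<in>I. \<forall>a. fin a \<longrightarrow> fmul a x \<in> I \<and> fmul x a \<in> I)"

text \<open>Defining relations of L(phi, r, s, 0).\<close>
definition downup_rels :: "complex poly \<Rightarrow> complex \<Rightarrow> complex \<Rightarrow> fa set" where
  "downup_rels phi r s =
     { fsub (mon [H,U]) (fscale r (mon [U,H])),
       fsub (mon [D,H]) (fscale r (mon [H,D])),
       fsub (fsub (mon [D,U]) (fscale s (mon [U,D]))) (evalH phi) }"

definition downup_ideal :: "complex poly \<Rightarrow> complex \<Rightarrow> complex \<Rightarrow> fa set \<Rightarrow> bool" where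
  "downup_ideal phi r s I \<longleftrightarrow> two_sided_ideal I \<and> downup_rels phi r s \<subseteq> I"

definition wdeg :: "gen list \<Rightarrow> int" where
  "wdeg w = int (length (filter (\<lambda>g. g = U) w)) - int (length (filter (\<lambda>g. g = D) w))"

definition hcomp :: "int \<Rightarrow> fa \<Rightarrow> fa" where
  "hcomp i x = (\<lambda>w. if wdeg w = i then x w else 0)"

definition conformal :: "complex poly \<Rightarrow> complex \<Rightarrow> complex \<Rightarrow> bool" where
  "conformal phi r s \<longleftrightarrow> (\<exists>psi. smult s psi - pcompose psi [:0, r:] = phi)"

text \<open>phi-tilde: phi_1(h) = s h^j phitilde(h^n), i.e. coefficient k of phitilde is a_{j+kn}/s.\<close>
definition phi_tilde :: "complex poly \<Rightarrow> complex \<Rightarrow> nat \<Rightarrow> nat \<Rightarrow> complex poly" where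
  "phi_tilde phi s n j = Poly (map (\<lambda>k. coeff phi (j + k * n) / s) [0..<degree phi + 1])"

end

theory Submission
  imports Defs
begin


lemma fmul_assoc: "fmul (fmul f g) h = fmul f (fmul g h)"
proof
  fix w :: "gen list"
  define N where "N = length w"
  define F where "F l k = f (take l w) * g (take (k-l) (drop l w)) * h (drop k w)" for l k
  have L: "fmul (fmul f g) h w = (\<Sum>k\<le>N. \<Sum>l\<le>k. F l (l + (k - l)))"
    unfolding fmul_def F_def N_def
    by (auto simp: sum_distrib_right min_def drop_take intro!: sum.cong)
  have R: "fmul f (fmul g h) w = (\<Sum>l\<le>N. \<Sum>m\<le>N-l. F l (l+m))"
    unfolding fmul_def F_def N_def
    by (auto simp: sum_distrib_left mult.assoc add.commute intro!: sum.cong)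
  have "(\<Sum>(l,m)\<in>{(i,j). i+j \<le> N}. F l (l+m)) = (\<Sum>k\<le>N. \<Sum>l\<le>k. F l (l + (k - l)))"
    by (rule sum.triangle_reindex_eq)
  moreover have "{(i,j). i+j \<le> N} = Sigma {..N} (\<lambda>l. {..N-l})" by auto
  ultimately have "(\<Sum>l\<le>N. \<Sum>m\<le>N-l. F l (l+m)) = (\<Sum>k\<le>N. \<Sum>l\<le>k. F l (l + (k - l)))"
    by (simp add: sum.Sigma)
  then show "fmul (fmul f g) h w = fmul f (fmul g h) w" using L R by simp
qed

lemma fin_fmul: assumes "fin f" "fin g" shows "fin (fmul f g)"
proof -
  have "{w. fmul f g w \<noteq> 0} \<subseteq> (\<lambda>(a,b). a @ b) ` ({w. f w \<noteq> 0} \<times> {w. g w \<noteq> 0})"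
  proof
    fix w assume "w \<in> {w. fmul f g w \<noteq> 0}"
    then obtain k where "f (take k w) * g (drop k w) \<noteq> 0"
      unfolding fmul_def by (auto elim: sum.not_neutral_contains_not_neutral)
    then show "w \<in> (\<lambda>(a,b). a @ b) ` ({w. f w \<noteq> 0} \<times> {w. g w \<noteq> 0})"
      by (auto intro!: image_eqI[where x="(take k w, drop k w)"])
  qed
  then show ?thesis using assms unfolding fin_def by (meson finite_SigmaI finite_imageI finite_subset)
qed

lemma fin_zero[simp]: "fin (\<lambda>w. 0)" by (simp add: fin_def)
lemma fin_mon[simp]: "fin (mon v)" by (simp add: fin_def mon_def)
lemma fin_fone[simp]: "fin fone" by (simp add: fone_def)
lemma fin_fadd[simp]: "fin f \<Longrightarrow> fin g \<Longrightarrow> fin (fadd f g)"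
  unfolding fin_def fadd_def by (rule finite_subset[of _ "{w. f w \<noteq> 0} \<union> {w. g w \<noteq> 0}"]) auto
lemma fin_fscale[simp]: "fin f \<Longrightarrow> fin (fscale c f)"
  unfolding fin_def fscale_def by (rule finite_subset[of _ "{w. f w \<noteq> 0}"]) auto
lemma fin_uminus[simp]: "fin f \<Longrightarrow> fin (\<lambda>w. - f w)"
  unfolding fin_def by simp
lemma fin_fsub[simp]: "fin f \<Longrightarrow> fin g \<Longrightarrow> fin (fsub f g)"
  unfolding fin_def fsub_def by (rule finite_subset[of _ "{w. f w \<noteq> 0} \<union> {w. g w \<noteq> 0}"]) auto

lemma fmul_fadd_left: "fmul (fadd f g) h = fadd (fmul f h) (fmul g h)"
  unfolding fmul_def fadd_def by (auto simp: distrib_right sum.distrib)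
lemma fmul_fadd_right: "fmul h (fadd f g) = fadd (fmul h f) (fmul h g)"
  unfolding fmul_def fadd_def by (auto simp: distrib_left sum.distrib)
lemma fmul_fsub_left: "fmul (fsub f g) h = fsub (fmul f h) (fmul g h)"
  unfolding fmul_def fsub_def by (auto simp: left_diff_distrib sum_subtractf)
lemma fmul_fsub_right: "fmul h (fsub f g) = fsub (fmul h f) (fmul h g)"
  unfolding fmul_def fsub_def by (auto simp: right_diff_distrib sum_subtractf)
lemma fmul_fscale_left: "fmul (fscale c f) h = fscale c (fmul f h)"
  unfolding fmul_def fscale_def by (auto simp: sum_distrib_left mult.assoc)
lemma fmul_fscale_right: "fmul h (fscale c f) = fscale c (fmul h f)"
  unfolding fmul_def fscale_def by (auto simp: sum_distrib_left mult_ac)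
lemma fmul_uminus_left: "fmul (\<lambda>w. - f w) h = (\<lambda>w. - fmul f h w)"
  unfolding fmul_def by (auto simp: sum_negf)
lemma fmul_uminus_right: "fmul h (\<lambda>w. - f w) = (\<lambda>w. - fmul h f w)"
  unfolding fmul_def by (auto simp: sum_negf)
lemma fmul_zero_left: "fmul (\<lambda>w. 0) h = (\<lambda>w. 0)"
  unfolding fmul_def by auto
lemma fmul_zero_right: "fmul h (\<lambda>w. 0) = (\<lambda>w. 0)"
  unfolding fmul_def by auto

lemma fmul_mon_left: "fmul (mon a) g = (\<lambda>w. if take (length a) w = a then g (drop (length a) w) else 0)"
proof
  fix w :: "gen list"
  have "fmul (mon a) g w = (\<Sum>k\<le>length w. if k = length a \<and> take (length a) w = a then g (drop (length a) w) else 0)"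
    unfolding fmul_def mon_def by (intro sum.cong) auto
  also have "\<dots> = (if take (length a) w = a then g (drop (length a) w) else 0)"
    by (cases "take (length a) w = a") (auto simp: sum.delta' dest: sym[where t=a] )
  finally show "fmul (mon a) g w = (if take (length a) w = a then g (drop (length a) w) else 0)" .
qed

lemma fmul_mon_mon: "fmul (mon a) (mon b) = mon (a @ b)"
  unfolding fmul_mon_left by (auto simp: mon_def fun_eq_iff) (metis append_take_drop_id)

lemma fmul_fone_left: "fmul fone f = f"
  unfolding fone_def fmul_mon_left by simp

lemma fmul_fone_right: "fmul f fone = f"
proof
  fix w :: "gen list"
  have "fmul f fone w = (\<Sum>k\<le>length w. if k = length w then f w else 0)"
    unfolding fmul_def fone_def mon_def by (intro sum.cong) auto
  then show "fmul f fone w = f w" by simp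
qed

typedef A = "{f::fa. fin f}" morphisms Rep Abs
  by (rule exI[of _ "\<lambda>w. 0"]) simp

setup_lifting type_definition_A

instantiation A :: ring_1
begin
lift_definition zero_A :: A is "\<lambda>w. 0" by simp
lift_definition one_A :: A is fone by simp
lift_definition plus_A :: "A \<Rightarrow> A \<Rightarrow> A" is fadd by simp
lift_definition minus_A :: "A \<Rightarrow> A \<Rightarrow> A" is fsub by simp
lift_definition uminus_A :: "A \<Rightarrow> A" is "\<lambda>f w. - f w" by simp
lift_definition times_A :: "A \<Rightarrow> A \<Rightarrow> A" is fmul by (rule fin_fmul)
instance
proof
  fix a b c :: A
  show "a + b + c = a + (b + c)" by transfer (simp add: fadd_def add.assoc)
  show "a + b = b + a" by transfer (simp add: fadd_def add.commute)
  show "0 + a = a" by transfer (simp add: fadd_def)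
  show "- a + a = 0" by transfer (simp add: fadd_def)
  show "a - b = a + - b" by transfer (simp add: fadd_def fsub_def)
  show "a * b * c = a * (b * c)" by transfer (rule fmul_assoc)
  show "(a + b) * c = a * c + b * c" by transfer (rule fmul_fadd_left)
  show "a * (b + c) = a * b + a * c" by transfer (rule fmul_fadd_right)
  show "1 * a = a" by transfer (rule fmul_fone_left)
  show "a * 1 = a" by transfer (rule fmul_fone_right)
  show "(0::A) \<noteq> 1" by transfer (simp add: fone_def mon_def fun_eq_iff)
qed
end

lift_definition sc :: "complex \<Rightarrow> A \<Rightarrow> A" is fscale by simp
lift_definition M :: "gen list \<Rightarrow> A" is mon by simp

lemma sc_mult_left[simp]: "sc c a * b = sc c (a * b)" by transfer (rule fmul_fscale_left)
lemma sc_mult_right[simp]: "a * sc c b = sc c (a * b)" by transfer (rule fmul_fscale_right)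
lemma sc_sc[simp]: "sc c (sc d a) = sc (c * d) a" by transfer (simp add: fscale_def mult.assoc)
lemma sc_add[simp]: "sc c (a + b) = sc c a + sc c b" by transfer (simp add: fscale_def fadd_def distrib_left)
lemma sc_diff[simp]: "sc c (a - b) = sc c a - sc c b" by transfer (simp add: fscale_def fsub_def right_diff_distrib)
lemma sc_minus[simp]: "sc c (- a) = - sc c a" by transfer (simp add: fscale_def)
lemma sc_add_left: "sc (c + d) a = sc c a + sc d a" by transfer (simp add: fscale_def fadd_def distrib_right)
lemma sc_diff_left: "sc (c - d) a = sc c a - sc d a" by transfer (simp add: fscale_def fsub_def left_diff_distrib)
lemma sc_one[simp]: "sc 1 a = a" by transfer (simp add: fscale_def)
lemma sc_zero[simp]: "sc 0 a = 0" by transfer (simp add: fscale_def)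
lemma sc_zero_right[simp]: "sc c 0 = 0" by transfer (simp add: fscale_def)
lemma sc_sum: "sc c (sum f S) = (\<Sum>i\<in>S. sc c (f i))"
  by (induction S rule: infinite_finite_induct) auto
lemma sc_sum_left: "sc (sum f S) a = (\<Sum>i\<in>S. sc (f i) a)"
  by (induction S rule: infinite_finite_induct) (auto simp: sc_add_left)
lemma sc_neg_one: "sc (-1) a = - a" by transfer (simp add: fscale_def)

lemma M_append: "M (a @ b) = M a * M b" by transfer (simp add: fmul_mon_mon)
lemma M_Nil: "M [] = 1" by transfer (simp add: fone_def)
lemma M_Cons: "M (g # w) = M [g] * M w" using M_append[of "[g]" w] by simp



lemma Rep_sum: "Rep (sum f S) = (\<lambda>w. \<Sum>i\<in>S. Rep (f i) w)"
  by (induction S rule: infinite_finite_induct) (auto simp: zero_A.rep_eq plus_A.rep_eq fadd_def)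

lemma Rep_sc: "Rep (sc c a) = (\<lambda>w. c * Rep a w)" by (simp add: sc.rep_eq fscale_def)

definition supp :: "A \<Rightarrow> gen list set" where "supp a = {w. Rep a w \<noteq> 0}"

lemma finite_supp[simp]: "finite (supp a)"
  using Rep[of a] by (simp add: supp_def fin_def)

lemma decomp: "a = (\<Sum>w\<in>supp a. sc (Rep a w) (M w))"
proof -
  have "Rep (\<Sum>w\<in>supp a. sc (Rep a w) (M w)) = Rep a"
  proof
    fix v
    have "Rep (\<Sum>w\<in>supp a. sc (Rep a w) (M w)) v = (\<Sum>w\<in>supp a. if v = w then Rep a w else 0)"
      by (simp add: Rep_sum Rep_sc M.rep_eq mon_def if_distrib cong: if_cong)
    also have "\<dots> = (if v \<in> supp a then Rep a v else 0)" by (simp add: sum.delta)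
    also have "\<dots> = Rep a v" by (simp add: supp_def)
    finally show "Rep (\<Sum>w\<in>supp a. sc (Rep a w) (M w)) v = Rep a v" .
  qed
  then show ?thesis by (metis Rep_inverse)
qed

definition hom :: "int \<Rightarrow> A \<Rightarrow> bool" where "hom i a \<longleftrightarrow> (\<forall>w\<in>supp a. wdeg w = i)"

lift_definition hc :: "int \<Rightarrow> A \<Rightarrow> A" is hcomp
  unfolding fin_def hcomp_def by (rule finite_subset[rotated]) auto

lemma hom_hc: "hom i (hc i a)" by (simp add: hom_def supp_def hc.rep_eq hcomp_def)

lemma hc_decomp: "a = (\<Sum>i\<in>wdeg ` supp a. hc i a)"
proof -
  have "Rep (\<Sum>i\<in>wdeg ` supp a. hc i a) = Rep a"
  proof
    fix v
    have "Rep (\<Sum>i\<in>wdeg ` supp a. hc i a) v = (\<Sum>i\<in>wdeg ` supp a. if wdeg v = i then Rep a v else 0)"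
      by (simp add: Rep_sum hc.rep_eq hcomp_def)
    also have "\<dots> = (if wdeg v \<in> wdeg ` supp a then Rep a v else 0)" by (simp add: sum.delta')
    also have "\<dots> = Rep a v" by (auto simp: supp_def)
    finally show "Rep (\<Sum>i\<in>wdeg ` supp a. hc i a) v = Rep a v" .
  qed
  then show ?thesis by (metis Rep_inverse)
qed

lemma hc_out: "i \<notin> wdeg ` supp a \<Longrightarrow> hc i a = 0"
  by (rule Rep_inject[THEN iffD1]) (auto simp: hc.rep_eq hcomp_def supp_def zero_A.rep_eq fun_eq_iff image_iff)

definition idl :: "A set \<Rightarrow> bool" where
  "idl J \<longleftrightarrow> 0 \<in> J \<and> (\<forall>x\<in>J. \<forall>y\<in>J. x + y \<in> J) \<and> (\<forall>x\<in>J. \<forall>a. a * x \<in> J \<and> x * a \<in> J)"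

definition md :: "A set \<Rightarrow> A \<Rightarrow> A \<Rightarrow> bool" where "md J a b \<longleftrightarrow> a - b \<in> J"

context fixes J assumes J: "idl J" begin

lemma J0: "0 \<in> J" using J by (simp add: idl_def)
lemma Jadd: "x \<in> J \<Longrightarrow> y \<in> J \<Longrightarrow> x + y \<in> J" using J by (simp add: idl_def)
lemma Jml: "x \<in> J \<Longrightarrow> a * x \<in> J" using J by (simp add: idl_def)
lemma Jmr: "x \<in> J \<Longrightarrow> x * a \<in> J" using J by (simp add: idl_def)
lemma Jsc: "x \<in> J \<Longrightarrow> sc c x \<in> J" using Jml[of x "sc c 1"] by simp
lemma Jneg: "x \<in> J \<Longrightarrow> - x \<in> J" using Jsc[of x "-1"] by (simp add: sc_neg_one)
lemma Jdiff: "x \<in> J \<Longrightarrow> y \<in> J \<Longrightarrow> x - y \<in> J" using Jadd[of x "-y"] Jneg by simp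
lemma Jsum: "(\<And>i. i \<in> S \<Longrightarrow> f i \<in> J) \<Longrightarrow> sum f S \<in> J"
  by (induction S rule: infinite_finite_induct) (auto simp: J0 Jadd)

lemma md_refl[simp]: "md J a a" by (simp add: md_def J0)
lemma md_sym: "md J a b \<Longrightarrow> md J b a" unfolding md_def using Jneg by fastforce
lemma md_trans: "md J a b \<Longrightarrow> md J b c \<Longrightarrow> md J a c"
  unfolding md_def using Jadd by fastforce
lemma md_add: "md J a b \<Longrightarrow> md J c d \<Longrightarrow> md J (a + c) (b + d)"
  unfolding md_def using Jadd by (metis add_diff_add)
lemma md_diff: "md J a b \<Longrightarrow> md J c d \<Longrightarrow> md J (a - c) (b - d)"
proof -
  assume "md J a b" "md J c d"
  then have "(a-b) - (c-d) \<in> J" using Jdiff unfolding md_def by blast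
  moreover have "a - c - (b - d) = (a-b) - (c-d)" by (simp add: algebra_simps)
  ultimately show ?thesis unfolding md_def by metis
qed
lemma md_ml: "md J a b \<Longrightarrow> md J (c * a) (c * b)"
  unfolding md_def using Jml by (metis right_diff_distrib)
lemma md_mr: "md J a b \<Longrightarrow> md J (a * c) (b * c)"
  unfolding md_def using Jmr by (metis left_diff_distrib)
lemma md_sc: "md J a b \<Longrightarrow> md J (sc c a) (sc c b)"
  unfolding md_def using Jsc by (metis sc_diff)
lemma md_sum: "(\<And>i. i \<in> S \<Longrightarrow> md J (f i) (g i)) \<Longrightarrow> md J (sum f S) (sum g S)"
  by (induction S rule: infinite_finite_induct) (auto intro: md_add)
lemma md_J: "md J a b \<Longrightarrow> a \<in> J \<Longrightarrow> b \<in> J"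
  unfolding md_def using Jdiff by fastforce
lemma md_mult: "md J a b \<Longrightarrow> md J c d \<Longrightarrow> md J (a * c) (b * d)"
  using md_ml md_mr md_trans by blast

end


lemma wdeg_append: "wdeg (a @ b) = wdeg a + wdeg b" by (simp add: wdeg_def)
lemma wdeg_Cons: "wdeg (g # w) = wdeg [g] + wdeg w" using wdeg_append[of "[g]" w] by simp
lemma wdeg_simps[simp]: "wdeg [U] = 1" "wdeg [D] = -1" "wdeg [H] = 0" "wdeg [] = 0"
  by (simp_all add: wdeg_def)

lemma sc_uminus_left: "sc (- c) a = - sc c a"
  by (metis mult_minus1 sc_neg_one sc_sc)

lemma vdm:
  assumes J: "idl J" and fin: "finite S"
  shows "inj_on lam S \<Longrightarrow> (\<And>k. k < card S \<Longrightarrow> (\<Sum>i\<in>S. sc (lam i ^ k) (y i)) \<in> J) \<Longrightarrow> i \<in> S \<Longrightarrow> y i \<in> J"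
  using fin
proof (induction S arbitrary: y i rule: finite_induct)
  case empty then show ?case by simp
next
  case (insert a F)
  define y' where "y' i = sc (lam i - lam a) (y i)" for i
  have inj: "inj_on lam F" using insert by (auto simp: inj_on_def)
  have "(\<Sum>i\<in>F. sc (lam i ^ k) (y' i)) \<in> J" if k: "k < card F" for k
  proof -
    have A: "(\<Sum>i\<in>insert a F. sc (lam i ^ Suc k) (y i)) \<in> J" using insert.prems(2)[of "Suc k"] k insert.hyps by simp
    have B0: "(\<Sum>i\<in>insert a F. sc (lam i ^ k) (y i)) \<in> J" using insert.prems(2)[of k] k insert.hyps by simp
    have B: "sc (lam a) (\<Sum>i\<in>insert a F. sc (lam i ^ k) (y i)) \<in> J" using Jsc[OF J B0] .
    have "(\<Sum>i\<in>insert a F. sc (lam i ^ Suc k) (y i)) - sc (lam a) (\<Sum>i\<in>insert a F. sc (lam i ^ k) (y i))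
        = (\<Sum>i\<in>insert a F. sc (lam i ^ Suc k - lam a * lam i ^ k) (y i))"
      by (simp add: sc_sum sum_subtractf[symmetric] sc_diff_left)
    also have "\<dots> = (\<Sum>i\<in>F. sc (lam i ^ Suc k - lam a * lam i ^ k) (y i))"
      using insert.hyps by simp
    also have "\<dots> = (\<Sum>i\<in>F. sc (lam i ^ k) (y' i))"
      by (intro sum.cong) (auto simp: y'_def algebra_simps)
    finally show ?thesis using A B Jdiff[OF J] by metis
  qed
  then have IH: "\<And>i. i \<in> F \<Longrightarrow> y' i \<in> J" using insert.IH[OF inj] by blast
  have yF: "y i \<in> J" if i: "i \<in> F" for i
  proof -
    have "lam i \<noteq> lam a" using insert i by (auto simp: inj_on_def)
    then have "y i = sc (inverse (lam i - lam a)) (y' i)" by (simp add: y'_def)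
    then show ?thesis using IH[OF i] Jsc[OF J] by simp
  qed
  have "(\<Sum>i\<in>insert a F. sc (lam i ^ 0) (y i)) \<in> J" using insert.prems(2)[of 0] insert.hyps by simp
  then have "y a + (\<Sum>i\<in>F. y i) \<in> J" using insert.hyps by simp
  moreover have "(\<Sum>i\<in>F. y i) \<in> J" using yF Jsum[OF J] by blast
  ultimately have "y a \<in> J" using Jdiff[OF J] by fastforce
  then show ?case using insert.prems(3) yF by auto
qed

context fixes J r assumes J: "idl J" and r0: "r \<noteq> 0"
  and hu: "md J (M[H] * M[U]) (sc r (M[U] * M[H]))"
  and dh: "md J (M[D] * M[H]) (sc r (M[H] * M[D]))"
begin

lemma hg: "md J (M[H] * M[g]) (sc (r powi wdeg [g]) (M[g] * M[H]))"
proof (cases g)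
  case U then show ?thesis using hu by simp
next
  case D
  have E: "M[H] * M[D] - sc (inverse r) (M[D] * M[H]) = sc (- inverse r) (M[D] * M[H] - sc r (M[H] * M[D]))"
  proof -
    have "- inverse r * r = -1" using r0 by simp
    then show ?thesis by (simp add: sc_uminus_left sc_neg_one)
  qed
  have P: "r powi wdeg [D] = inverse r" by (simp add: power_int_minus)
  have "sc (- inverse r) (M[D] * M[H] - sc r (M[H] * M[D])) \<in> J" by (rule Jsc[OF J dh[unfolded md_def]])
  then show ?thesis unfolding md_def D P E .
next
  case H then show ?thesis using md_refl[OF J] by simp
qed

lemmas md_tr[trans] = md_trans[OF J]

lemma hcomm_M: "md J (M[H] * M w) (sc (r powi wdeg w) (M w * M[H]))"
proof (induction w)
  case Nil then show ?case using md_refl[OF J] by (simp add: M_Nil)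
next
  case (Cons g w)
  have "M[H] * M (g # w) = (M[H] * M[g]) * M w" by (simp add: M_Cons[of g w] mult.assoc)
  also have "md J \<dots> (sc (r powi wdeg [g]) (M[g] * M[H]) * M w)" by (rule md_mr[OF J hg])
  also have "\<dots> = sc (r powi wdeg [g]) (M[g] * (M[H] * M w))" by (simp add: mult.assoc)
  also have "md J \<dots> (sc (r powi wdeg [g]) (M[g] * sc (r powi wdeg w) (M w * M[H])))"
    by (rule md_sc[OF J md_ml[OF J Cons.IH]])
  also have "\<dots> = sc (r powi wdeg (g # w)) (M (g # w) * M[H])"
    using r0 by (simp add: M_Cons[of g w] mult.assoc wdeg_Cons[of g w] power_int_add)
  finally show ?case .
qed

lemma hcomm_hom: assumes "hom i y" shows "md J (M[H] * y) (sc (r powi i) (y * M[H]))"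
proof -
  have "M[H] * y = (\<Sum>w\<in>supp y. sc (Rep y w) (M[H] * M w))"
    by (subst decomp[of y]) (simp add: sum_distrib_left)
  also have "md J \<dots> (\<Sum>w\<in>supp y. sc (Rep y w) (sc (r powi i) (M w * M[H])))"
    using assms hcomm_M by (intro md_sum[OF J] md_sc[OF J]) (auto simp: hom_def)
  also have "\<dots> = sc (r powi i) ((\<Sum>w\<in>supp y. sc (Rep y w) (M w)) * M[H])"
    by (simp add: sum_distrib_right sc_sum mult.commute)
  also have "\<dots> = sc (r powi i) (y * M[H])" by (simp only: decomp[of y, symmetric])
  finally show ?thesis .
qed

lemma hcomm_pow: assumes "hom i y" shows "md J (M[H] ^ k * y) (sc ((r powi i) ^ k) (y * M[H] ^ k))"
proof (induction k)
  case 0 then show ?case using md_refl[OF J] by simp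
next
  case (Suc k)
  have "M[H] ^ Suc k * y = M[H] * (M[H] ^ k * y)" by (simp add: mult.assoc)
  also have "md J \<dots> (M[H] * sc ((r powi i) ^ k) (y * M[H] ^ k))" by (rule md_ml[OF J Suc.IH])
  also have "\<dots> = sc ((r powi i) ^ k) ((M[H] * y) * M[H] ^ k)" by (simp add: mult.assoc)
  also have "md J \<dots> (sc ((r powi i) ^ k) (sc (r powi i) (y * M[H]) * M[H] ^ k))"
    by (rule md_sc[OF J md_mr[OF J hcomm_hom[OF assms]]])
  also have "\<dots> = sc ((r powi i) ^ Suc k) (y * M[H] ^ Suc k)"
    by (simp add: mult.assoc mult.commute power_commutes)
  finally show ?case .
qed

end


lemma final_step:
  assumes J: "idl J"
    and X: "\<And>k. k < card (wdeg ` supp a) \<Longrightarrow> (\<Sum>i\<in>wdeg ` supp a. sc (lam i ^ k) (hc i a * P)) \<in> J"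
    and inj: "inj_on lam (wdeg ` supp a)"
  shows "hc i a * P \<in> J"
proof (cases "i \<in> wdeg ` supp a")
  case True
  show ?thesis by (rule vdm[OF J _ inj X True]) auto
next
  case False then show ?thesis using hc_out[OF False] J0[OF J] by simp
qed

lemma hom_M: "hom (wdeg w) (M w)" by (simp add: hom_def supp_def M.rep_eq mon_def)

lemma powi_inj:
  fixes r :: complex
  assumes r0: "r \<noteq> 0" and inf: "\<forall>n>0. r ^ n \<noteq> 1"
  shows "inj_on (\<lambda>i. r powi i) S"
proof (rule inj_onI)
  fix i i' assume "r powi i = r powi i'"
  then have e: "r powi (i - i') = 1" using r0 by (simp add: power_int_diff)
  show "i = i'"
  proof (rule ccontr)
    assume "i \<noteq> i'"
    then consider "i - i' > 0" | "i - i' < 0" by linarith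
    then show False
    proof cases
      case 1
      then have "r ^ nat (i - i') = 1" using e by (simp add: power_int_nonneg_exp)
      then show False using inf 1 by auto
    next
      case 2
      have "r powi (i' - i) = 1" proof -
        have "r powi (i' - i) = inverse (r powi (i - i'))" by (metis minus_diff_eq power_int_minus)
        then show ?thesis using e by simp
      qed
      then have "r ^ nat (i' - i) = 1" using 2 by (simp add: power_int_nonneg_exp)
      then show False using inf 2 by auto
    qed
  qed
qed

lemma inf_case:
  fixes r :: complex
  assumes J: "idl J" and r0: "r \<noteq> 0"
    and hu: "md J (M[H] * M[U]) (sc r (M[U] * M[H]))"
    and dh: "md J (M[D] * M[H]) (sc r (M[H] * M[D]))"
    and inf: "\<forall>n>0. r ^ n \<noteq> 1" and aJ: "a \<in> J"
  shows "\<exists>m. \<forall>i. hc i a * M[H] ^ m \<in> J"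
proof -
  define S where "S = wdeg ` supp a"
  define N where "N = card S"
  have "hc i a * M[H] ^ N \<in> J" for i
  proof (rule final_step[OF J _ powi_inj[OF r0 inf]])
    fix k assume k: "k < card (wdeg ` supp a)"
    then have kN: "k \<le> N" by (simp add: N_def S_def)
    have pw: "M[H] ^ k * M[H] ^ (N - k) = M[H] ^ N" using kN by (simp flip: power_add)
    have inJ: "M[H] ^ k * a * M[H] ^ (N - k) \<in> J" using aJ Jml[OF J] Jmr[OF J] by blast
    have E1: "M[H] ^ k * a * M[H] ^ (N - k) = (\<Sum>i\<in>S. M[H] ^ k * hc i a) * M[H] ^ (N - k)"
      unfolding S_def by (subst hc_decomp[of a]) (simp add: sum_distrib_left)
    have E2: "md J ((\<Sum>i\<in>S. M[H] ^ k * hc i a) * M[H] ^ (N - k))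
         ((\<Sum>i\<in>S. sc ((r powi i) ^ k) (hc i a * M[H] ^ k)) * M[H] ^ (N - k))"
      by (intro md_mr[OF J] md_sum[OF J] hcomm_pow[OF J r0 hu dh hom_hc])
    have E3: "(\<Sum>i\<in>S. sc ((r powi i) ^ k) (hc i a * M[H] ^ k)) * M[H] ^ (N - k)
        = (\<Sum>i\<in>S. sc ((r powi i) ^ k) (hc i a * M[H] ^ N))"
      by (simp add: sum_distrib_right mult.assoc pw)
    have "md J (M[H] ^ k * a * M[H] ^ (N - k)) (\<Sum>i\<in>S. sc ((r powi i) ^ k) (hc i a * M[H] ^ N))"
      using E2 unfolding E1[symmetric] E3 .
    from md_J[OF J this inJ] show "(\<Sum>i\<in>wdeg ` supp a. sc ((r powi i) ^ k) (hc i a * M[H] ^ N)) \<in> J"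
      by (simp add: S_def)
  qed
  then show ?thesis by blast
qed



lemma Mpow: "M[H] ^ k = M (replicate k H)"
  by (induction k) (simp_all add: M_Nil M_Cons[of H "replicate _ H"])

lemma rep_eq_replicate: "(w = replicate k H) \<longleftrightarrow> (\<forall>g\<in>set w. g = H) \<and> length w = k"
  by (metis (mono_tags, lifting) in_set_replicate length_replicate replicate_length_same)

lemma Rep_evalHpow:
  assumes n: "n > 0" and Dd: "degree p \<le> B"
  shows "Rep (\<Sum>m\<le>B. sc (coeff p m) (M[H] ^ (m * n))) = evalHpow p n"
proof
  fix w :: "gen list"
  have "Rep (\<Sum>m\<le>B. sc (coeff p m) (M[H] ^ (m * n))) w
      = (\<Sum>m\<le>B. if m = length w div n \<and> (\<forall>g\<in>set w. g = H) \<and> n dvd length w then coeff p m else 0)"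
    unfolding Rep_sum Rep_sc Mpow M.rep_eq mon_def
  proof (intro sum.cong refl)
    fix m assume "m \<in> {..B}"
    show "coeff p m * (if w = replicate (m * n) H then 1 else 0)
        = (if m = length w div n \<and> (\<forall>g\<in>set w. g = H) \<and> n dvd length w then coeff p m else 0)"
      unfolding rep_eq_replicate using n by auto
  qed
  also have "\<dots> = evalHpow p n w"
  proof (cases "(\<forall>g\<in>set w. g = H) \<and> n dvd length w")
    case True
    then show ?thesis
      using Dd by (cases "length w div n \<le> B") (auto simp: evalHpow_def sum.delta' coeff_eq_0)
  next
    case False
    then have "\<not> ((\<forall>g\<in>set w. g = H) \<and> n dvd length w)" by blast
    then show ?thesis unfolding evalHpow_def by (intro trans[OF sum.neutral]) auto
  qed
  finally show "Rep (\<Sum>m\<le>B. sc (coeff p m) (M[H] ^ (m * n))) w = evalHpow p n w" .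
qed

lemma Rep_evalH: "Rep (\<Sum>m\<le>degree p. sc (coeff p m) (M[H] ^ m)) = evalH p"
  using Rep_evalHpow[of 1 p "degree p"] by (simp add: evalH_def)

definition JJ :: "fa set \<Rightarrow> A set" where "JJ I = {a. Rep a \<in> I}"

lemma idl_JJ: "two_sided_ideal I \<Longrightarrow> idl (JJ I)"
  unfolding two_sided_ideal_def idl_def JJ_def
  by (auto simp: zero_A.rep_eq plus_A.rep_eq times_A.rep_eq Rep[simplified])



lemma frac_aux:
  fixes a s x :: complex assumes "s - x \<noteq> 0" shows "a / (s - x) * x - s * (a / (s - x)) = - a"
proof -
  have q: "\<And>q. q * x - s * q = - (q * (s - x))" by (simp add: algebra_simps)
  have "a / (s - x) * x - s * (a / (s - x)) = - (a / (s - x) * (s - x))" by (rule q)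
  also have "\<dots> = - a" using assms by simp
  finally show ?thesis .
qed

lemma pow_mod_ne:
  fixes r :: complex
  assumes n: "n > 0" "r ^ n = 1" and mn: "\<forall>k. 0 < k \<and> k < n \<longrightarrow> r ^ k \<noteq> 1"
    and j: "j < n" and k: "k mod n \<noteq> j"
  shows "r ^ k \<noteq> r ^ j"
proof
  assume e: "r ^ k = r ^ j"
  have r0: "r \<noteq> 0" using n by (metis power_0_left zero_neq_one not_gr0)
  have "r ^ k = r ^ (k mod n)" using n
    by (metis (no_types) div_mult_mod_eq power_add power_mult power_one mult_1 mult.commute)
  then have e2: "r ^ (k mod n) = r ^ j" using e by simp
  define a where "a = k mod n"
  have a: "a < n" "a \<noteq> j" using n k by (auto simp: a_def)
  show False
  proof (cases "a < j")
    case True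
    have "r ^ a * r ^ (j - a) = r ^ j" using True by (simp flip: power_add)
    also have "r ^ j = r ^ a" using e2 by (simp add: a_def)
    finally have "r ^ a * r ^ (j - a) = r ^ a" .
    then have "r ^ (j - a) = 1" using r0 by simp
    then show ?thesis using mn True j by force
  next
    case False
    then have "j < a" using a by simp
    have "r ^ j * r ^ (a - j) = r ^ a" using \<open>j < a\<close> by (simp flip: power_add)
    also have "r ^ a = r ^ j" using e2 by (simp add: a_def)
    finally have "r ^ j * r ^ (a - j) = r ^ j" .
    then have "r ^ (a - j) = 1" using r0 by simp
    then show ?thesis using mn \<open>j < a\<close> a by force
  qed
qed

locale fin_setup =
  fixes J :: "A set" and r s :: complex and phi :: "complex poly" and n j :: nat and C :: complex
  assumes J: "idl J" and r0: "r \<noteq> 0" and sj: "s = r ^ j" and n: "n > 0" "r ^ n = 1"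
    and mn: "\<forall>k. 0 < k \<and> k < n \<longrightarrow> r ^ k \<noteq> 1" and j: "j < n" and C0: "C \<noteq> 0"
    and hu: "md J (M[H] * M[U]) (sc r (M[U] * M[H]))"
    and dh: "md J (M[D] * M[H]) (sc r (M[H] * M[D]))"
    and du: "md J (M[D] * M[U]) (sc s (M[U] * M[D]) + (\<Sum>k\<le>degree phi. sc (coeff phi k) (M[H] ^ k)))"
    and T: "md J (\<Sum>m\<le>degree phi. sc (coeff phi (j + m * n) / s) (M[H] ^ (m * n))) (sc C 1)"
begin

lemmas md_tr[trans] = md_trans[OF J]

definition "N = degree phi"
definition "K0 = {k. k \<le> N \<and> k mod n \<noteq> j}"
definition "K1 = {k. k \<le> N \<and> k mod n = j}"
definition "cc k = coeff phi k / (s - r ^ k)"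
definition "Psi = (\<Sum>k\<in>K0. sc (cc k) (M[H] ^ k))"
definition "Psi' = (\<Sum>k\<in>K0. sc (cc k * r ^ k) (M[H] ^ k))"
definition "Phi = (\<Sum>k\<le>N. sc (coeff phi k) (M[H] ^ k))"
definition "Phi1 = (\<Sum>k\<in>K1. sc (coeff phi k) (M[H] ^ k))"
definition "W = M[U] * M[D] + Psi"
definition "Z = W * M[H] ^ (n - j)"

lemma s0: "s \<noteq> 0" using sj r0 by simp

lemma hk_u: "md J (M[H] ^ k * M[U]) (sc (r ^ k) (M[U] * M[H] ^ k))"
  using hcomm_pow[OF J r0 hu dh hom_M[of "[U]"], of k] by simp

lemma hk_d: "md J (M[H] ^ k * M[D]) (sc (inverse r ^ k) (M[D] * M[H] ^ k))"
  using hcomm_pow[OF J r0 hu dh hom_M[of "[D]"], of k] by (simp add: power_int_minus)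

lemma d_hk: "md J (M[D] * M[H] ^ k) (sc (r ^ k) (M[H] ^ k * M[D]))"
proof -
  have "M[D] * M[H] ^ k = sc (r ^ k) (sc (inverse r ^ k) (M[D] * M[H] ^ k))"
    using r0 by (simp add: power_mult_distrib[symmetric])
  also have "md J \<dots> (sc (r ^ k) (M[H] ^ k * M[D]))"
    by (rule md_sc[OF J md_sym[OF J hk_d]])
  finally show ?thesis .
qed

lemma Psi_u: "md J (Psi * M[U]) (M[U] * Psi')"
proof -
  have "Psi * M[U] = (\<Sum>k\<in>K0. sc (cc k) (M[H] ^ k * M[U]))" by (simp add: Psi_def sum_distrib_right)
  also have "md J \<dots> (\<Sum>k\<in>K0. sc (cc k) (sc (r ^ k) (M[U] * M[H] ^ k)))"
    by (intro md_sum[OF J] md_sc[OF J] hk_u)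
  also have "\<dots> = M[U] * Psi'" by (simp add: Psi'_def sum_distrib_left mult.commute)
  finally show ?thesis .
qed

lemma d_Psi: "md J (M[D] * Psi) (Psi' * M[D])"
proof -
  have "M[D] * Psi = (\<Sum>k\<in>K0. sc (cc k) (M[D] * M[H] ^ k))" by (simp add: Psi_def sum_distrib_left)
  also have "md J \<dots> (\<Sum>k\<in>K0. sc (cc k) (sc (r ^ k) (M[H] ^ k * M[D])))"
    by (intro md_sum[OF J] md_sc[OF J] d_hk)
  also have "\<dots> = Psi' * M[D]" by (simp add: Psi'_def sum_distrib_right mult.commute)
  finally show ?thesis .
qed

lemma finK: "finite K0" "finite K1" by (auto simp: K0_def K1_def)

lemma Phi_split: "Phi + Psi' - sc s Psi = Phi1"
proof -
  have dec: "{..N} = K0 \<union> K1" "K0 \<inter> K1 = {}" by (auto simp: K0_def K1_def)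
  have "Phi = (\<Sum>k\<in>K0. sc (coeff phi k) (M[H] ^ k)) + Phi1"
    unfolding Phi_def Phi1_def dec(1) by (rule sum.union_disjoint) (use finK dec(2) in auto)
  moreover have "Psi' - sc s Psi = (\<Sum>k\<in>K0. sc (- coeff phi k) (M[H] ^ k))"
  proof -
    have "Psi' - sc s Psi = (\<Sum>k\<in>K0. sc (cc k * r ^ k - s * cc k) (M[H] ^ k))"
      by (simp add: Psi'_def Psi_def sc_sum sum_subtractf[symmetric] sc_diff_left)
    also have "\<dots> = (\<Sum>k\<in>K0. sc (- coeff phi k) (M[H] ^ k))"
    proof (intro sum.cong refl)
      fix k assume "k \<in> K0"
      then have "r ^ k \<noteq> s" using pow_mod_ne[OF n mn j] sj by (auto simp: K0_def)
      then have ne: "s - r ^ k \<noteq> 0" by simp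
      have "cc k * r ^ k - s * cc k = - coeff phi k"
        unfolding cc_def using frac_aux[OF ne] .
      then show "sc (cc k * r ^ k - s * cc k) (M[H] ^ k) = sc (- coeff phi k) (M[H] ^ k)" by simp
    qed
    finally show ?thesis .
  qed
  ultimately show ?thesis by (simp add: sc_uminus_left sum_negf algebra_simps)
qed

end


context fin_setup begin

lemma Phi1_T: "md J Phi1 (sc (s * C) (M[H] ^ j))"
proof -
  define g where "g k = sc (coeff phi k) (M[H] ^ k)" for k
  define Ts where "Ts = (\<Sum>m\<le>N. sc (coeff phi (j + m * n) / s) (M[H] ^ (m * n)))"
  have inj: "inj_on (\<lambda>m. j + m * n) {..N}" using n by (auto simp: inj_on_def)
  have sub: "K1 \<subseteq> (\<lambda>m. j + m * n) ` {..N}"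
  proof
    fix k assume k: "k \<in> K1"
    have "k div n * n + k mod n = k" by (rule div_mult_mod_eq)
    then have "k = j + (k div n) * n" "k div n \<le> N" using k order_trans[OF div_le_dividend[of k n]]
      by (auto simp: K1_def)
    then show "k \<in> (\<lambda>m. j + m * n) ` {..N}" by blast
  qed
  have "sc s (M[H] ^ j * Ts) = (\<Sum>m\<le>N. g (j + m * n))"
    using s0 by (simp add: Ts_def g_def sum_distrib_left sc_sum power_add)
  also have "\<dots> = (\<Sum>k\<in>(\<lambda>m. j + m * n) ` {..N}. g k)" by (simp add: sum.reindex[OF inj])
  also have "\<dots> = (\<Sum>k\<in>K1. g k)"
  proof (rule sum.mono_neutral_right[OF _ sub])
    show "finite ((\<lambda>m. j + m * n) ` {..N})" by simp
    show "\<forall>i\<in>(\<lambda>m. j + m * n) ` {..N} - K1. g i = 0"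
    proof
      fix i assume i: "i \<in> (\<lambda>m. j + m * n) ` {..N} - K1"
      then obtain x where x: "i = j + x * n" by blast
      have "i mod n = j" using j x by simp
      then have "i > N" using i by (auto simp: K1_def)
      then show "g i = 0" by (simp add: g_def N_def coeff_eq_0)
    qed
  qed
  also have "\<dots> = Phi1" by (simp add: Phi1_def g_def)
  finally have e: "Phi1 = sc s (M[H] ^ j * Ts)" by simp
  have "md J (sc s (M[H] ^ j * Ts)) (sc s (M[H] ^ j * sc C 1))"
    using T unfolding Ts_def N_def by (intro md_sc[OF J] md_ml[OF J])
  then show ?thesis using e by simp
qed

lemma PP: "Phi + Psi' = Phi1 + sc s Psi"
  using Phi_split by (metis diff_add_cancel)

lemma W_u: "md J (W * M[U]) (M[U] * (sc s W + sc (s * C) (M[H] ^ j)))"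
proof -
  have "W * M[U] = M[U] * (M[D] * M[U]) + Psi * M[U]" by (simp add: W_def algebra_simps)
  also have "md J \<dots> (M[U] * (sc s (M[U] * M[D]) + Phi) + M[U] * Psi')"
    using du Psi_u unfolding Phi_def N_def by (intro md_add[OF J] md_ml[OF J])
  also have "\<dots> = M[U] * (sc s (M[U] * M[D]) + (Phi + Psi'))" by (simp add: distrib_left add.assoc)
  also have "\<dots> = M[U] * (sc s W + Phi1)" unfolding PP by (simp add: W_def add_ac)
  also have "md J \<dots> (M[U] * (sc s W + sc (s * C) (M[H] ^ j)))"
    by (intro md_ml[OF J] md_add[OF J] md_refl[OF J] Phi1_T)
  finally show ?thesis .
qed

lemma d_W: "md J (M[D] * W) ((sc s W + sc (s * C) (M[H] ^ j)) * M[D])"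
proof -
  have "M[D] * W = (M[D] * M[U]) * M[D] + M[D] * Psi" by (simp add: W_def algebra_simps)
  also have "md J \<dots> ((sc s (M[U] * M[D]) + Phi) * M[D] + Psi' * M[D])"
    using du d_Psi unfolding Phi_def N_def by (intro md_add[OF J] md_mr[OF J])
  also have "\<dots> = (sc s (M[U] * M[D]) + (Phi + Psi')) * M[D]" by (simp add: distrib_right add.assoc)
  also have "\<dots> = (sc s W + Phi1) * M[D]" unfolding PP by (simp add: W_def add_ac)
  also have "md J \<dots> ((sc s W + sc (s * C) (M[H] ^ j)) * M[D])"
    by (intro md_mr[OF J] md_add[OF J] md_refl[OF J] Phi1_T)
  finally show ?thesis .
qed

lemma rs1: "r ^ (n - j) * s = 1"
  using j n by (simp add: sj flip: power_add)

lemma Z_u: "md J (Z * M[U]) (M[U] * Z + sc C (M[U] * M[H] ^ n))"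
proof -
  have "Z * M[U] = W * (M[H] ^ (n - j) * M[U])" by (simp add: Z_def mult.assoc)
  also have "md J \<dots> (W * sc (r ^ (n - j)) (M[U] * M[H] ^ (n - j)))" by (intro md_ml[OF J] hk_u)
  also have "\<dots> = sc (r ^ (n - j)) ((W * M[U]) * M[H] ^ (n - j))" by (simp add: mult.assoc)
  also have "md J \<dots> (sc (r ^ (n - j)) ((M[U] * (sc s W + sc (s * C) (M[H] ^ j))) * M[H] ^ (n - j)))"
    by (intro md_sc[OF J] md_mr[OF J] W_u)
  also have "\<dots> = sc (r ^ (n - j) * s) (M[U] * Z) + sc (r ^ (n - j) * s * C) (M[U] * (M[H] ^ j * M[H] ^ (n - j)))"
    by (simp add: Z_def algebra_simps)
  also have "\<dots> = M[U] * Z + sc C (M[U] * M[H] ^ n)"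
    using j by (simp add: rs1 flip: power_add)
  finally show ?thesis .
qed

lemma hn_d: "md J (M[H] ^ n * M[D]) (M[D] * M[H] ^ n)"
  using md_sym[OF J d_hk[of n]] n by simp

lemma Z_d: "md J (Z * M[D]) (M[D] * Z + sc (- C) (M[D] * M[H] ^ n))"
proof -
  have "M[D] * Z = (M[D] * W) * M[H] ^ (n - j)" by (simp add: Z_def mult.assoc)
  also have "md J \<dots> ((sc s W + sc (s * C) (M[H] ^ j)) * M[D] * M[H] ^ (n - j))"
    by (intro md_mr[OF J] d_W)
  also have "\<dots> = (sc s W + sc (s * C) (M[H] ^ j)) * (M[D] * M[H] ^ (n - j))" by (simp add: mult.assoc)
  also have "md J \<dots> ((sc s W + sc (s * C) (M[H] ^ j)) * sc (r ^ (n - j)) (M[H] ^ (n - j) * M[D]))"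
    by (intro md_ml[OF J] d_hk)
  also have "\<dots> = sc (r ^ (n - j) * s) (Z * M[D]) + sc (r ^ (n - j) * s * C) ((M[H] ^ j * M[H] ^ (n - j)) * M[D])"
    by (simp add: Z_def algebra_simps)
  also have "\<dots> = Z * M[D] + sc C (M[H] ^ n * M[D])"
    using j by (simp add: rs1 flip: power_add)
  finally have 1: "md J (M[D] * Z) (Z * M[D] + sc C (M[H] ^ n * M[D]))" .
  have 2: "md J (Z * M[D]) (M[D] * Z - sc C (M[H] ^ n * M[D]))"
  proof -
    have e: "\<And>a b c :: A. a - (b - c) = - (b - (a + c))" by (simp add: algebra_simps)
    show ?thesis using Jneg[OF J 1[unfolded md_def]] unfolding md_def e .
  qed
  also have "md J \<dots> (M[D] * Z - sc C (M[D] * M[H] ^ n))"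
    by (intro md_diff[OF J] md_refl[OF J] md_sc[OF J] hn_d)
  finally show ?thesis by (simp add: sc_uminus_left)
qed

lemma Psi_h: "Psi * M[H] = M[H] * Psi"
  by (simp add: Psi_def sum_distrib_left sum_distrib_right power_commutes)

lemma W_h: "md J (W * M[H]) (M[H] * W)"
proof -
  have "W * M[H] = M[U] * (M[D] * M[H]) + Psi * M[H]" by (simp add: W_def algebra_simps)
  also have "md J \<dots> (M[U] * sc r (M[H] * M[D]) + Psi * M[H])"
    by (intro md_add[OF J] md_ml[OF J] dh md_refl[OF J])
  also have "\<dots> = sc r (M[U] * M[H]) * M[D] + Psi * M[H]" by (simp add: mult.assoc)
  also have "md J \<dots> ((M[H] * M[U]) * M[D] + M[H] * Psi)"
    unfolding Psi_h by (intro md_add[OF J] md_mr[OF J] md_sym[OF J hu] md_refl[OF J])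
  also have "\<dots> = M[H] * W" by (simp add: W_def algebra_simps)
  finally show ?thesis .
qed

lemma Z_h: "md J (Z * M[H]) (M[H] * Z)"
proof -
  have "Z * M[H] = (W * M[H]) * M[H] ^ (n - j)" by (simp add: Z_def mult.assoc power_commutes)
  also have "md J \<dots> ((M[H] * W) * M[H] ^ (n - j))" by (intro md_mr[OF J] W_h)
  also have "\<dots> = M[H] * Z" by (simp add: Z_def mult.assoc)
  finally show ?thesis .
qed

lemma hn_central: "md J (M[H] ^ n * M w) (M w * M[H] ^ n)"
proof -
  have "(r powi wdeg w) ^ n = 1"
  proof -
    have "(r powi wdeg w) ^ n = r powi (int n * wdeg w)" by (simp add: power_int_power' mult.commute)
    also have "\<dots> = (r ^ n) powi wdeg w" by (simp add: power_int_mult)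
    finally show ?thesis using n by simp
  qed
  then show ?thesis using hcomm_pow[OF J r0 hu dh hom_M[of w], of n] by simp
qed

lemma Zg: "md J (Z * M[g]) (M[g] * Z + sc (of_int (wdeg [g]) * C) (M[g] * M[H] ^ n))"
proof (cases g)
  case U then show ?thesis using Z_u by simp
next
  case D then show ?thesis using Z_d by simp
next
  case H then show ?thesis using Z_h by simp
qed

lemma ZM: "md J (Z * M w) (M w * Z + sc (of_int (wdeg w) * C) (M w * M[H] ^ n))"
proof (induction w)
  case Nil then show ?case using md_refl[OF J] by (simp add: M_Nil)
next
  case (Cons g w)
  have "Z * M (g # w) = (Z * M[g]) * M w" by (simp add: M_Cons[of g w] mult.assoc)
  also have "md J \<dots> ((M[g] * Z + sc (of_int (wdeg [g]) * C) (M[g] * M[H] ^ n)) * M w)"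
    by (intro md_mr[OF J] Zg)
  also have "\<dots> = M[g] * (Z * M w) + sc (of_int (wdeg [g]) * C) (M[g] * (M[H] ^ n * M w))"
    by (simp add: algebra_simps)
  also have "md J \<dots> (M[g] * (M w * Z + sc (of_int (wdeg w) * C) (M w * M[H] ^ n))
       + sc (of_int (wdeg [g]) * C) (M[g] * (M w * M[H] ^ n)))"
    by (intro md_add[OF J] md_ml[OF J] md_sc[OF J] Cons.IH hn_central)
  also have "\<dots> = M (g # w) * Z + sc (of_int (wdeg (g # w)) * C) (M (g # w) * M[H] ^ n)"
    by (simp add: M_Cons[of g w] wdeg_Cons[of g w] algebra_simps sc_add_left)
  finally show ?case .
qed

lemma Zhom: assumes "hom i y" shows "md J (Z * y) (y * Z + sc (of_int i * C) (y * M[H] ^ n))"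
proof -
  have "Z * y = (\<Sum>w\<in>supp y. sc (Rep y w) (Z * M w))"
    by (subst decomp[of y]) (simp add: sum_distrib_left)
  also have "md J \<dots> (\<Sum>w\<in>supp y. sc (Rep y w) (M w * Z + sc (of_int i * C) (M w * M[H] ^ n)))"
    using assms ZM by (intro md_sum[OF J] md_sc[OF J]) (auto simp: hom_def)
  also have "\<dots> = (\<Sum>w\<in>supp y. sc (Rep y w) (M w)) * Z + sc (of_int i * C) ((\<Sum>w\<in>supp y. sc (Rep y w) (M w)) * M[H] ^ n)"
    by (simp add: sum_distrib_right sc_sum mult.commute sum.distrib)
  also have "\<dots> = y * Z + sc (of_int i * C) (y * M[H] ^ n)" by (simp only: decomp[of y, symmetric])
  finally show ?thesis .
qed

lemma Z_hk: "md J (M[H] ^ k * Z) (Z * M[H] ^ k)"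
proof (induction k)
  case 0 then show ?case using md_refl[OF J] by simp
next
  case (Suc k)
  have "M[H] ^ Suc k * Z = M[H] * (M[H] ^ k * Z)" by (simp add: mult.assoc)
  also have "md J \<dots> (M[H] * (Z * M[H] ^ k))" by (intro md_ml[OF J] Suc.IH)
  also have "\<dots> = (M[H] * Z) * M[H] ^ k" by (simp add: mult.assoc)
  also have "md J \<dots> ((Z * M[H]) * M[H] ^ k)" by (intro md_mr[OF J] md_sym[OF J Z_h])
  also have "\<dots> = Z * M[H] ^ Suc k" by (simp add: mult.assoc)
  finally show ?case .
qed

definition "adZ x = Z * x - x * Z"

lemma adZ_md: "md J x y \<Longrightarrow> md J (adZ x) (adZ y)"
  unfolding adZ_def by (intro md_diff[OF J] md_ml[OF J] md_mr[OF J])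
lemma adZ_J: "x \<in> J \<Longrightarrow> adZ x \<in> J"
  unfolding adZ_def by (intro Jdiff[OF J] Jml[OF J] Jmr[OF J])
lemma adZ_pow_J: "x \<in> J \<Longrightarrow> (adZ ^^ k) x \<in> J"
  by (induction k) (auto simp: adZ_J)
lemma adZ_sum: "adZ (sum f S) = (\<Sum>i\<in>S. adZ (f i))"
  unfolding adZ_def by (simp add: sum_distrib_left sum_distrib_right sum_subtractf)
lemma adZ_sc: "adZ (sc c x) = sc c (adZ x)"
  unfolding adZ_def by simp

lemma ad_step: assumes "hom i y"
  shows "md J (adZ (y * M[H] ^ (n * k))) (sc (of_int i * C) (y * M[H] ^ (n * Suc k)))"
proof -
  have "adZ (y * M[H] ^ (n * k)) = (Z * y) * M[H] ^ (n * k) - y * (M[H] ^ (n * k) * Z)"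
    by (simp add: adZ_def mult.assoc)
  also have "md J \<dots> ((y * Z + sc (of_int i * C) (y * M[H] ^ n)) * M[H] ^ (n * k) - y * (Z * M[H] ^ (n * k)))"
    by (intro md_diff[OF J] md_mr[OF J] md_ml[OF J] Zhom[OF assms] Z_hk)
  also have "\<dots> = sc (of_int i * C) (y * (M[H] ^ n * M[H] ^ (n * k)))"
    by (simp add: algebra_simps)
  also have "\<dots> = sc (of_int i * C) (y * M[H] ^ (n * Suc k))" by (simp flip: power_add)
  finally show ?thesis .
qed

lemma ad_iter: "md J ((adZ ^^ k) a) (\<Sum>i\<in>wdeg ` supp a. sc ((of_int i * C) ^ k) (hc i a * M[H] ^ (n * k)))"
proof (induction k)
  case 0
  show ?case using md_refl[OF J] by (simp add: hc_decomp[of a, symmetric])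
next
  case (Suc k)
  have "(adZ ^^ Suc k) a = adZ ((adZ ^^ k) a)" by simp
  also have "md J \<dots> (adZ (\<Sum>i\<in>wdeg ` supp a. sc ((of_int i * C) ^ k) (hc i a * M[H] ^ (n * k))))"
    by (rule adZ_md[OF Suc.IH])
  also have "\<dots> = (\<Sum>i\<in>wdeg ` supp a. sc ((of_int i * C) ^ k) (adZ (hc i a * M[H] ^ (n * k))))"
    by (simp add: adZ_sum adZ_sc)
  also have "md J \<dots> (\<Sum>i\<in>wdeg ` supp a. sc ((of_int i * C) ^ k) (sc (of_int i * C) (hc i a * M[H] ^ (n * Suc k))))"
    by (intro md_sum[OF J] md_sc[OF J] ad_step hom_hc)
  also have "\<dots> = (\<Sum>i\<in>wdeg ` supp a. sc ((of_int i * C) ^ Suc k) (hc i a * M[H] ^ (n * Suc k)))"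
    by (simp add: mult.commute)
  finally show ?case .
qed

lemma fin_main: assumes aJ: "a \<in> J" shows "\<exists>m. \<forall>i. hc i a * M[H] ^ m \<in> J"
proof -
  define S where "S = wdeg ` supp a"
  define NN where "NN = card S"
  have inj: "inj_on (\<lambda>i. of_int i * C) S" using C0 by (auto simp: inj_on_def)
  have "hc i a * M[H] ^ (n * NN) \<in> J" for i
  proof (rule final_step[OF J _ inj[unfolded S_def]])
    fix k assume k: "k < card (wdeg ` supp a)"
    then have kN: "k \<le> NN" by (simp add: NN_def S_def)
    have pw: "M[H] ^ (n * k) * M[H] ^ (n * (NN - k)) = M[H] ^ (n * NN)"
      using kN by (simp flip: power_add add: add_mult_distrib2[symmetric])
    have inJ: "(adZ ^^ k) a * M[H] ^ (n * (NN - k)) \<in> J" using adZ_pow_J[OF aJ] Jmr[OF J] by blast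
    have E2: "md J ((adZ ^^ k) a * M[H] ^ (n * (NN - k)))
       ((\<Sum>i\<in>S. sc ((of_int i * C) ^ k) (hc i a * M[H] ^ (n * k))) * M[H] ^ (n * (NN - k)))"
      unfolding S_def by (intro md_mr[OF J] ad_iter)
    have E3: "(\<Sum>i\<in>S. sc ((of_int i * C) ^ k) (hc i a * M[H] ^ (n * k))) * M[H] ^ (n * (NN - k))
        = (\<Sum>i\<in>S. sc ((of_int i * C) ^ k) (hc i a * M[H] ^ (n * NN)))"
      by (simp add: sum_distrib_right mult.assoc pw)
    from md_J[OF J E2[unfolded E3] inJ]
    show "(\<Sum>i\<in>wdeg ` supp a. sc ((of_int i * C) ^ k) (hc i a * M[H] ^ (n * NN))) \<in> J"
      by (simp add: S_def)
  qed
  then show ?thesis by blast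
qed

end


lemma nonconf_exp:
  assumes "\<not> conformal phi r s" shows "\<exists>i. s = r ^ i"
proof (rule ccontr)
  assume ne: "\<not> (\<exists>i. s = r ^ i)"
  define psi where "psi = Poly (map (\<lambda>i. coeff phi i / (s - r ^ i)) [0..<degree phi + 1])"
  have cpsi: "coeff psi i = (if i \<le> degree phi then coeff phi i / (s - r ^ i) else 0)" for i
    by (auto simp: psi_def nth_default_def simp del: upt_Suc)
  have "smult s psi - pcompose psi [:0, r:] = phi"
  proof (rule poly_eqI)
    fix i
    have ne': "s - r ^ i \<noteq> 0" using ne by auto
    show "coeff (smult s psi - pcompose psi [:0, r:]) i = coeff phi i"
    proof (cases "i \<le> degree phi")
      case True
      have q: "\<And>q. s * q - r ^ i * q = q * (s - r ^ i)" by (simp add: algebra_simps)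
      have "s * (coeff phi i / (s - r ^ i)) - r ^ i * (coeff phi i / (s - r ^ i))
           = coeff phi i / (s - r ^ i) * (s - r ^ i)" by (rule q)
      also have "\<dots> = coeff phi i" using ne' by simp
      finally show ?thesis using True by (simp add: coeff_pcompose_linear cpsi)
    next
      case False then show ?thesis by (simp add: coeff_pcompose_linear cpsi coeff_eq_0)
    qed
  qed
  then show False using assms by (auto simp: conformal_def)
qed

lemma Rep_MM: "Rep (M a * M b) = mon (a @ b)"
  by (simp add: times_A.rep_eq M.rep_eq fmul_mon_mon)

theorem mainTheorem16:
  fixes phi :: "complex poly" and r s :: complex and I :: "fa set" and x :: fa
  assumes "r \<noteq> 0" and "s \<noteq> 0"
    and "\<not> conformal phi r s"
    and "downup_ideal phi r s I"
    and "\<And>n j. \<lbrakk> n > 0; r ^ n = 1; \<forall>k. 0 < k \<and> k < n \<longrightarrow> r ^ k \<noteq> 1; j < n; s = r ^ j \<rbrakk>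
           \<Longrightarrow> \<exists>C. C \<noteq> 0 \<and> fsub (evalHpow (phi_tilde phi s n j) n) (fscale C fone) \<in> I"
    and "x \<in> I"
  shows "\<exists>m::nat. \<forall>i::int. fmul (hcomp i x) (hpow m) \<in> I"
proof -
  note r0 = assms(1)
  have TI: "two_sided_ideal I" and rels: "downup_rels phi r s \<subseteq> I"
    using assms(4) by (auto simp: downup_ideal_def)
  define J where "J = JJ I"
  have J: "idl J" unfolding J_def by (rule idl_JJ[OF TI])
  have inJ: "a \<in> J \<longleftrightarrow> Rep a \<in> I" for a by (simp add: J_def JJ_def)
  have hu: "md J (M[H] * M[U]) (sc r (M[U] * M[H]))"
    using rels unfolding md_def inJ downup_rels_def
    by (simp add: minus_A.rep_eq sc.rep_eq Rep_MM)
  have dh: "md J (M[D] * M[H]) (sc r (M[H] * M[D]))"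
    using rels unfolding md_def inJ downup_rels_def
    by (simp add: minus_A.rep_eq sc.rep_eq Rep_MM)
  have du: "md J (M[D] * M[U]) (sc s (M[U] * M[D]) + (\<Sum>k\<le>degree phi. sc (coeff phi k) (M[H] ^ k)))"
    using rels unfolding md_def inJ downup_rels_def
    by (simp add: diff_diff_eq[symmetric] minus_A.rep_eq sc.rep_eq Rep_MM Rep_evalH)
  have finx: "fin x" using TI assms(6) by (auto simp: two_sided_ideal_def)
  define a where "a = Abs x"
  have Ra: "Rep a = x" using finx by (simp add: a_def Abs_inverse)
  have aJ: "a \<in> J" using assms(6) Ra inJ by simp
  have concl: "fmul (hcomp i x) (hpow m) = Rep (hc i a * M[H] ^ m)" for i m
    by (simp add: times_A.rep_eq hc.rep_eq Ra Mpow M.rep_eq hpow_def)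
  have "\<exists>m. \<forall>i. hc i a * M[H] ^ m \<in> J"
  proof (cases "\<exists>n>0. r ^ n = 1")
    case False
    then show ?thesis using inf_case[OF J r0 hu dh _ aJ] by blast
  next
    case True
    define n where "n = (LEAST n. n > 0 \<and> r ^ n = 1)"
    have n: "n > 0" "r ^ n = 1" using LeastI_ex[OF True[unfolded Bex_def]] by (auto simp: n_def)
    have mn: "\<forall>k. 0 < k \<and> k < n \<longrightarrow> r ^ k \<noteq> 1" using not_less_Least by (auto simp: n_def)
    obtain i0 where i0: "s = r ^ i0" using nonconf_exp[OF assms(3)] by blast
    define j where "j = i0 mod n"
    have jn: "j < n" using n by (simp add: j_def)
    have sj: "s = r ^ j"
    proof -
      have "r ^ i0 = r ^ (n * (i0 div n) + i0 mod n)" by simp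
      also have "\<dots> = (r ^ n) ^ (i0 div n) * r ^ j" by (simp only: j_def power_add power_mult)
      finally show ?thesis using i0 n by simp
    qed
    obtain C where C0: "C \<noteq> 0" and CI: "fsub (evalHpow (phi_tilde phi s n j) n) (fscale C fone) \<in> I"
      using assms(5)[OF n mn jn sj] by blast
    define pt where "pt = phi_tilde phi s n j"
    have cpt: "coeff pt m = (if m \<le> degree phi then coeff phi (j + m * n) / s else 0)" for m
      by (auto simp: pt_def phi_tilde_def nth_default_def simp del: upt_Suc)
    have dpt: "degree pt \<le> degree phi" by (rule degree_le) (auto simp: cpt)
    have T: "md J (\<Sum>m\<le>degree phi. sc (coeff phi (j + m * n) / s) (M[H] ^ (m * n))) (sc C 1)"
    proof -
      have "(\<Sum>m\<le>degree phi. sc (coeff phi (j + m * n) / s) (M[H] ^ (m * n)))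
          = (\<Sum>m\<le>degree phi. sc (coeff pt m) (M[H] ^ (m * n)))" by (intro sum.cong) (auto simp: cpt)
      then show ?thesis using CI[folded pt_def] unfolding md_def inJ
        by (simp add: minus_A.rep_eq sc.rep_eq one_A.rep_eq Rep_evalHpow[OF n(1) dpt])
    qed
    interpret fin_setup J r s phi n j C
      using J r0 sj n mn jn C0 hu dh du T by unfold_locales
    show ?thesis by (rule fin_main[OF aJ])
  qed
  then show ?thesis using inJ concl by metis
qed


end
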